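(* Let $S$ be an average $\tau$-mutation system with $\tau>1$ and starting word of length $m$, and let $Y_n=|S(n)|$. Then there is a constant $C_0$ such that for all $n\ge1$, \[\frac{1}{(n(\tau-1)+m)^2}\,\mathbb{E}\Big[\big(Y_n-n(\tau-1)-m\big)^2\Big]\le\frac{C_0}{n}.\]
   Context: Let $\mathcal{A}=\{a_0,\dots,a_{d-1}\}$. A mutation law assigns to each $a_t$ a finitely supported probability distribution $\mathbb{P}_{a_t}$ on the finite nonempty words over $\mathcal{A}$; $\vartheta(a_t)$ is a random word with law $\mathbb{P}_{a_t}$; it is an average $\tau$-mutation law if $\mathbb{E}|\vartheta(a_t)|=\tau$ for all $t$. A mutation step on $w=w_0\cdots w_{m-1}$ picks $i$ uniformly in $\{0,\dots,m-1\}$ and replaces $w_i$ by an independent sample of $\vartheta(w_i)$. The system is $S(0)=w$, $S(n)=\vartheta(S(n-1))$ with independent randomness at each step. *)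

theory Defs
  imports "HOL-Probability.Probability"
begin

definition mutation_law :: "('a \<Rightarrow> 'a list pmf) \<Rightarrow> bool" where
  "mutation_law P \<longleftrightarrow> (\<forall>a. finite (set_pmf (P a)) \<and> (\<forall>v \<in> set_pmf (P a). v \<noteq> []))"

definition avg_mutation_law :: "real \<Rightarrow> ('a \<Rightarrow> 'a list pmf) \<Rightarrow> bool" where
  "avg_mutation_law \<tau> P \<longleftrightarrow> mutation_law P \<and>
     (\<forall>a. measure_pmf.expectation (P a) (\<lambda>v. real (length v)) = \<tau>)"

definition mutation_step :: "('a \<Rightarrow> 'a list pmf) \<Rightarrow> 'a list \<Rightarrow> 'a list pmf" where
  "mutation_step P w =
     bind_pmf (pmf_of_set {0..<length w})
       (\<lambda>i. map_pmf (\<lambda>v. take i w @ v @ drop (Suc i) w) (P (w ! i)))"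

definition mutation_system :: "('a \<Rightarrow> 'a list pmf) \<Rightarrow> 'a list \<Rightarrow> nat \<Rightarrow> 'a list pmf" where
  "mutation_system P w n = ((\<lambda>p. bind_pmf p (mutation_step P)) ^^ n) (return_pmf w)"

end

theory Submission
  imports Defs
begin

lemma bind_exp:
  fixes f :: "'b \<Rightarrow> real"
  assumes fp: "finite (set_pmf p)" and fN: "\<And>x. x \<in> set_pmf p \<Longrightarrow> finite (set_pmf (N x))"
    and nn: "\<And>y. f y \<ge> 0"
  shows "measure_pmf.expectation (bind_pmf p N) f = measure_pmf.expectation p (\<lambda>x. measure_pmf.expectation (N x) f)"
proof -
  have fb: "finite (set_pmf (bind_pmf p N))" using fp fN by (simp add: set_bind_pmf)
  have "ennreal (measure_pmf.expectation (bind_pmf p N) f) = (\<integral>\<^sup>+y. ennreal (f y) \<partial>bind_pmf p N)"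
    by (rule nn_integral_eq_integral[symmetric]) (auto intro: integrable_measure_pmf_finite[OF fb] simp: nn)
  also have "\<dots> = (\<integral>\<^sup>+x. \<integral>\<^sup>+y. ennreal (f y) \<partial>N x \<partial>p)" by simp
  also have "\<dots> = (\<integral>\<^sup>+x. ennreal (measure_pmf.expectation (N x) f) \<partial>p)"
    by (rule nn_integral_cong_AE) (auto simp: AE_measure_pmf_iff nn intro!: nn_integral_eq_integral integrable_measure_pmf_finite fN)
  also have "\<dots> = ennreal (measure_pmf.expectation p (\<lambda>x. measure_pmf.expectation (N x) f))"
    by (rule nn_integral_eq_integral) (auto intro: integrable_measure_pmf_finite[OF fp] simp: nn)
  finally show ?thesis
    by (subst (asm) ennreal_inj) (auto simp: nn integral_nonneg_AE)
qed

lemma letter_bound: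
  assumes avg: "avg_mutation_law \<tau> P" and K: "\<And>a s. s \<in> set_pmf (P a) \<Longrightarrow> length s \<le> K"
    and tpos: "\<tau> > 0"
  shows "measure_pmf.expectation (P a) (\<lambda>s. (c + real (length s) - \<tau>)^2) \<le> c^2 + (real K + \<tau>)^2"
proof -
  have fin: "finite (set_pmf (P a))" using avg unfolding avg_mutation_law_def mutation_law_def by auto
  have EL: "measure_pmf.expectation (P a) (\<lambda>s. real (length s)) = \<tau>"
    using avg unfolding avg_mutation_law_def by auto
  note I = integrable_measure_pmf_finite[OF fin]
  have eq: "(\<lambda>s. (c + real (length s) - \<tau>)^2) = (\<lambda>s. c^2 + (2*c) * (real (length s) - \<tau>) + (real (length s) - \<tau>)^2)"
    by (auto simp: power2_eq_square algebra_simps)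
  have "measure_pmf.expectation (P a) (\<lambda>s. (c + real (length s) - \<tau>)^2)
      = c^2 + (2*c) * (measure_pmf.expectation (P a) (\<lambda>s. real (length s)) - \<tau>) + measure_pmf.expectation (P a) (\<lambda>s. (real (length s) - \<tau>)^2)"
    unfolding eq by (simp add: I integral_diff)
  also have "\<dots> = c^2 + measure_pmf.expectation (P a) (\<lambda>s. (real (length s) - \<tau>)^2)" using EL by simp
  also have "measure_pmf.expectation (P a) (\<lambda>s. (real (length s) - \<tau>)^2) \<le> measure_pmf.expectation (P a) (\<lambda>s. (real K + \<tau>)^2)"
  proof (rule integral_mono_AE)
    show "AE s in measure_pmf (P a). (real (length s) - \<tau>)^2 \<le> (real K + \<tau>)^2"
    proof (unfold AE_measure_pmf_iff, intro ballI)
      fix s assume "s \<in> set_pmf (P a)"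
      hence "real (length s) \<le> real K" using K by auto
      hence "\<bar>real (length s) - \<tau>\<bar> \<le> \<bar>real K + \<tau>\<bar>" using tpos by auto
      thus "(real (length s) - \<tau>)^2 \<le> (real K + \<tau>)^2" by (simp add: abs_le_square_iff)
    qed
  qed (auto simp: I)
  finally show ?thesis by simp
qed

lemma step_bound:
  assumes avg: "avg_mutation_law \<tau> P" and K: "\<And>a s. s \<in> set_pmf (P a) \<Longrightarrow> length s \<le> K"
    and tpos: "\<tau> > 0" and v: "v \<noteq> []"
  shows "measure_pmf.expectation (mutation_step P v) (\<lambda>u. (real (length u) - d)^2)
     \<le> (real (length v) - d + \<tau> - 1)^2 + (real K + \<tau>)^2"
proof -
  have fin: "\<And>a. finite (set_pmf (P a))" using avg unfolding avg_mutation_law_def mutation_law_def by auto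
  let ?S = "{0..<length v}"
  have S: "finite ?S" "?S \<noteq> {}" using v by auto
  let ?c = "real (length v) - d + \<tau> - 1"
  let ?X = "?c^2 + (real K + \<tau>)^2"
  have "measure_pmf.expectation (mutation_step P v) (\<lambda>u. (real (length u) - d)^2)
     = measure_pmf.expectation (pmf_of_set ?S) (\<lambda>i. measure_pmf.expectation (P (v ! i)) (\<lambda>s. (real (length (take i v @ s @ drop (Suc i) v)) - d)^2))"
    unfolding mutation_step_def
    by (subst bind_exp) (use S in \<open>auto simp: fin\<close>)
  also have "\<dots> = (\<Sum>i\<in>?S. measure_pmf.expectation (P (v ! i)) (\<lambda>s. (real (length (take i v @ s @ drop (Suc i) v)) - d)^2)) / card ?S"
    by (intro integral_pmf_of_set S)
  also have "\<dots> \<le> (\<Sum>i\<in>?S. ?X) / card ?S"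
  proof (intro divide_right_mono sum_mono)
    fix i assume i: "i \<in> ?S"
    have e: "\<And>s. real (length (take i v @ s @ drop (Suc i) v)) - d = ?c + real (length s) - \<tau>"
      using i by auto
    have L: "measure_pmf.expectation (P (v ! i)) (\<lambda>s. (?c + real (length s) - \<tau>)^2) \<le> ?X"
      by (rule letter_bound[OF avg K tpos])
    show "measure_pmf.expectation (P (v ! i)) (\<lambda>s. (real (length (take i v @ s @ drop (Suc i) v)) - d)^2) \<le> ?X"
      unfolding e using L .
  qed simp
  also have "\<dots> = ?X" using S by simp
  finally show ?thesis .
qed

lemma sys_Suc: "mutation_system P w (Suc n) = bind_pmf (mutation_system P w n) (mutation_step P)"
  unfolding mutation_system_def by simp

lemma sys_inv:
  assumes avg: "avg_mutation_law \<tau> P" and w: "w \<noteq> []"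
  shows "finite (set_pmf (mutation_system P w n)) \<and> (\<forall>v\<in>set_pmf (mutation_system P w n). v \<noteq> [])"
proof (induction n)
  case 0 thus ?case using w by (simp add: mutation_system_def)
next
  case (Suc n)
  have fin: "\<And>a. finite (set_pmf (P a))" and ne: "\<And>a s. s \<in> set_pmf (P a) \<Longrightarrow> s \<noteq> []"
    using avg unfolding avg_mutation_law_def mutation_law_def by auto
  have st: "finite (set_pmf (mutation_step P v)) \<and> (\<forall>u\<in>set_pmf (mutation_step P v). u \<noteq> [])" if "v \<noteq> []" for v
  proof -
    have S: "finite {0..<length v}" "{0..<length v} \<noteq> {}" using that by auto
    show ?thesis unfolding mutation_step_def using S by (auto simp: fin dest: ne)
  qed
  show ?case using Suc st unfolding sys_Suc by auto
qed

lemma sys_bound: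
  assumes avg: "avg_mutation_law \<tau> P" and K: "\<And>a s. s \<in> set_pmf (P a) \<Longrightarrow> length s \<le> K"
    and tpos: "\<tau> > 0" and w: "w \<noteq> []" and m: "length w = m"
  shows "measure_pmf.expectation (mutation_system P w n)
        (\<lambda>v. (real (length v) - real n * (\<tau> - 1) - real m)^2) \<le> real n * (real K + \<tau>)^2"
proof (induction n)
  case 0 thus ?case using m by (simp add: mutation_system_def)
next
  case (Suc n)
  let ?S = "mutation_system P w n"
  have inv: "finite (set_pmf ?S)" "\<And>v. v \<in> set_pmf ?S \<Longrightarrow> v \<noteq> []" using sys_inv[OF avg w, of n] by auto
  have fin: "finite (set_pmf (mutation_step P v))" if "v \<in> set_pmf ?S" for v
  proof -
    have "finite (\<Union>M\<in>set_pmf ?S. set_pmf (mutation_step P M))"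
      using sys_inv[OF avg w, of "Suc n"] unfolding sys_Suc by auto
    moreover have "set_pmf (mutation_step P v) \<subseteq> (\<Union>M\<in>set_pmf ?S. set_pmf (mutation_step P M))"
      using that by auto
    ultimately show ?thesis by (rule finite_subset[rotated])
  qed
  have eq: "\<And>v. (real (length v) - real (Suc n) * (\<tau> - 1) - real m) = real (length v) - (real (Suc n) * (\<tau> - 1) + real m)"
    by simp
  have "measure_pmf.expectation (mutation_system P w (Suc n))
        (\<lambda>v. (real (length v) - real (Suc n) * (\<tau> - 1) - real m)^2)
      = measure_pmf.expectation ?S (\<lambda>v. measure_pmf.expectation (mutation_step P v)
            (\<lambda>u. (real (length u) - (real (Suc n) * (\<tau> - 1) + real m))^2))"
    unfolding sys_Suc eq by (rule bind_exp) (auto simp: inv fin)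
  also have "\<dots> \<le> measure_pmf.expectation ?S (\<lambda>v. (real (length v) - real n * (\<tau> - 1) - real m)^2 + (real K + \<tau>)^2)"
  proof (rule integral_mono_AE)
    show "AE v in measure_pmf ?S. measure_pmf.expectation (mutation_step P v)
            (\<lambda>u. (real (length u) - (real (Suc n) * (\<tau> - 1) + real m))^2)
          \<le> (real (length v) - real n * (\<tau> - 1) - real m)^2 + (real K + \<tau>)^2"
    proof (unfold AE_measure_pmf_iff, intro ballI)
      fix v assume v: "v \<in> set_pmf ?S"
      have e2: "real (length v) - (real (Suc n) * (\<tau> - 1) + real m) + \<tau> - 1 = real (length v) - real n * (\<tau> - 1) - real m"
        by (simp add: algebra_simps)
      have SB: "measure_pmf.expectation (mutation_step P v)
            (\<lambda>u. (real (length u) - (real (Suc n) * (\<tau> - 1) + real m))^2)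
          \<le> (real (length v) - (real (Suc n) * (\<tau> - 1) + real m) + \<tau> - 1)^2 + (real K + \<tau>)^2"
        by (rule step_bound[OF avg K tpos inv(2)[OF v]])
      show "measure_pmf.expectation (mutation_step P v)
            (\<lambda>u. (real (length u) - (real (Suc n) * (\<tau> - 1) + real m))^2)
          \<le> (real (length v) - real n * (\<tau> - 1) - real m)^2 + (real K + \<tau>)^2"
        using SB unfolding e2 .
    qed
  qed (auto intro: integrable_measure_pmf_finite inv)
  also have "\<dots> = measure_pmf.expectation ?S (\<lambda>v. (real (length v) - real n * (\<tau> - 1) - real m)^2) + (real K + \<tau>)^2"
    by (simp add: integrable_measure_pmf_finite[OF inv(1)])
  also have "\<dots> \<le> real (Suc n) * (real K + \<tau>)^2" using Suc by (simp add: algebra_simps)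
  finally show ?case .
qed

lemma alg: "(x::real) > 0 \<Longrightarrow> y > 0 \<Longrightarrow> 1 / (x * y)^2 * (x * B) = (B / y^2) / x"
  by (simp add: field_simps power2_eq_square)

theorem mainTheorem11:
  fixes P :: "'a::finite \<Rightarrow> 'a list pmf" and w :: "'a list" and \<tau> :: real and m :: nat
  assumes "avg_mutation_law \<tau> P"
    and "\<tau> > 1"
    and "w \<noteq> []"
    and "length w = m"
  shows "\<exists>C0::real. \<forall>n::nat. n \<ge> 1 \<longrightarrow>
    (1 / (real n * (\<tau> - 1) + real m)^2) *
      measure_pmf.expectation (mutation_system P w n)
        (\<lambda>v. (real (length v) - real n * (\<tau> - 1) - real m)^2)
    \<le> C0 / real n"
proof -
  have fin: "\<And>a. finite (set_pmf (P a))" using assms(1) unfolding avg_mutation_law_def mutation_law_def by auto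
  define A where "A = (\<Union>a. set_pmf (P a))"
  have fA: "finite A" unfolding A_def using fin by auto
  define K where "K = Max (insert 0 (length ` A))"
  have K: "\<And>a s. s \<in> set_pmf (P a) \<Longrightarrow> length s \<le> K"
    unfolding K_def using fA by (auto simp: A_def intro!: Max_ge)
  define B where "B = (real K + \<tau>)^2"
  show ?thesis
  proof (intro exI allI impI)
    fix n :: nat assume n: "n \<ge> 1"
    let ?E = "measure_pmf.expectation (mutation_system P w n)
        (\<lambda>v. (real (length v) - real n * (\<tau> - 1) - real m)^2)"
    have E: "?E \<le> real n * B" unfolding B_def
      using sys_bound[OF assms(1) K _ assms(3,4)] assms(2) by simp
    have E0: "?E \<ge> 0" by (rule integral_nonneg_AE) auto
    have t: "\<tau> - 1 > 0" using assms(2) by simp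
    have np: "real n > 0" using n by simp
    have D: "real n * (\<tau> - 1) \<le> real n * (\<tau> - 1) + real m" by simp
    have Dp: "real n * (\<tau> - 1) > 0" using t np by simp
    have sq: "(real n * (\<tau> - 1))^2 \<le> (real n * (\<tau> - 1) + real m)^2"
      using D Dp by (intro power_mono) auto
    have pos2: "(real n * (\<tau> - 1) + real m)^2 > 0" using D Dp by simp
    have "(1 / (real n * (\<tau> - 1) + real m)^2) * ?E \<le> (1 / (real n * (\<tau> - 1))^2) * (real n * B)"
      by (intro mult_mono E divide_left_mono sq) (use Dp E0 pos2 n in \<open>auto intro!: mult_pos_pos\<close>)
    also have "\<dots> = (B / (\<tau> - 1)^2) / real n" by (rule alg[OF np t])
    finally show "(1 / (real n * (\<tau> - 1) + real m)^2) * ?E \<le> (B / (\<tau> - 1)^2) / real n" .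
  qed
qed

end
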